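(* Fix $p\ge3$. For $(\beta,h)\in[0,\infty)\times\mathbb R$: (1) $\sup_{x\in[-1,1]}H_{\beta,h,p}(x)\ge0$, with equality if and only if $(\beta,h)\in[0,\tilde\beta_p]\times\{0\}$. (2) Every local maximizer of $H_{\beta,h,p}$ on $[-1,1]$ lies in $(-1,1)$. (3) $H_{\beta,h,p}$ has at most two local maximizers if $p=3$ and at most three local maximizers if $p\ge4$. Moreover, $H_{\beta,h,p}$ has three global maximizers if and only if $p\ge4$ is even, $h=0$ and $\beta=\tilde\beta_p$.
   Context: $I(x)=\frac12[(1+x)\log(1+x)+(1-x)\log(1-x)]$ on $[-1,1]$ and $H_{\beta,h,p}(x)=\beta x^p+hx-I(x)$. $\tilde\beta_p=\sup\{\beta\ge0:\sup_{x\in[-1,1]}H_{\beta,0,p}(x)=0\}$. A global maximizer is a point where $H_{\beta,h,p}$ attains its supremum over $[-1,1]$. *)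

theory Defs
  imports "HOL-Analysis.Analysis"
begin

definition xlogx :: "real \<Rightarrow> real" where
  "xlogx t = (if t = 0 then 0 else t * ln t)"

definition Ifun :: "real \<Rightarrow> real" where
  "Ifun x = (xlogx (1 + x) + xlogx (1 - x)) / 2"

definition Hfun :: "real \<Rightarrow> real \<Rightarrow> nat \<Rightarrow> real \<Rightarrow> real" where
  "Hfun \<beta> h p x = \<beta> * x ^ p + h * x - Ifun x"

definition supH :: "real \<Rightarrow> real \<Rightarrow> nat \<Rightarrow> real" where
  "supH \<beta> h p = (SUP x\<in>{-1..1}. Hfun \<beta> h p x)"

definition beta_tilde :: "nat \<Rightarrow> real" where
  "beta_tilde p = Sup {\<beta>. \<beta> \<ge> 0 \<and> supH \<beta> 0 p = 0}"

definition is_local_max :: "(real \<Rightarrow> real) \<Rightarrow> real \<Rightarrow> bool" where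
  "is_local_max f x \<longleftrightarrow> x \<in> {-1..1} \<and>
     (\<exists>\<epsilon>>0. \<forall>y\<in>{-1..1}. \<bar>y - x\<bar> < \<epsilon> \<longrightarrow> f y \<le> f x)"

definition is_global_max :: "(real \<Rightarrow> real) \<Rightarrow> real \<Rightarrow> bool" where
  "is_global_max f x \<longleftrightarrow> x \<in> {-1..1} \<and> (\<forall>y\<in>{-1..1}. f y \<le> f x)"

end

theory Submission
  imports Defs "HOL-Real_Asymp.Real_Asymp"
begin


lemma xlogx_deriv: assumes "t > 0" shows "(xlogx has_real_derivative ln t + 1) (at t)"
proof -
  have "((\<lambda>t. t * ln t) has_real_derivative ln t + 1) (at t)"
    using assms by (auto intro!: derivative_eq_intros simp: numeral_2_eq_2)
  then show ?thesis
    by (rule has_field_derivative_transform_within_open[where S="{0<..}"]) (use assms in \<open>auto simp: xlogx_def\<close>)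
qed

lemma xlogx_cont: "continuous_on {0..} xlogx"
proof -
  have lim: "((\<lambda>t::real. t * ln t) \<longlongrightarrow> 0) (at_right 0)" by real_asymp
  have "continuous (at t within {0..}) xlogx" if "t \<ge> 0" for t
  proof (cases "t = 0")
    case True
    have "(xlogx \<longlongrightarrow> 0) (at_right 0)"
      using lim by (rule Lim_transform_within[where d=1]) (auto simp: xlogx_def)
    then have "(xlogx \<longlongrightarrow> xlogx 0) (at 0 within {0..})"
      by (simp add: xlogx_def at_within_Ici_at_right)
    then show ?thesis using True by (simp add: continuous_within)
  next
    case False
    then have "t > 0" using that by simp
    then have "isCont xlogx t" using xlogx_deriv DERIV_isCont by blast
    then show ?thesis using continuous_at_imp_continuous_at_within by blast
  qed
  then show ?thesis by (simp add: continuous_on_eq_continuous_within)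
qed

lemma Ifun_cont: "continuous_on {-1..1} Ifun"
proof -
  have a: "continuous_on {-1..1} (\<lambda>x. xlogx (1+x))"
    by (rule continuous_on_compose2[OF xlogx_cont]) (auto intro!: continuous_intros)
  have b: "continuous_on {-1..1} (\<lambda>x. xlogx (1-x))"
    by (rule continuous_on_compose2[OF xlogx_cont]) (auto intro!: continuous_intros)
  show ?thesis unfolding Ifun_def[abs_def] by (intro continuous_intros a b) auto
qed

lemma Hfun_cont: "continuous_on {-1..1} (Hfun \<beta> h p)"
  unfolding Hfun_def[abs_def] by (intro continuous_intros Ifun_cont)

definition dH :: "real \<Rightarrow> real \<Rightarrow> nat \<Rightarrow> real \<Rightarrow> real" where
  "dH \<beta> h p x = \<beta> * real p * x^(p-1) + h - (ln (1+x) - ln (1-x))/2"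
definition d2H :: "real \<Rightarrow> nat \<Rightarrow> real \<Rightarrow> real" where
  "d2H \<beta> p x = \<beta> * real p * real (p-1) * x^(p-2) - 1/(1-x^2)"

lemma Hfun_deriv: assumes "-1 < x" "x < 1"
  shows "(Hfun \<beta> h p has_real_derivative dH \<beta> h p x) (at x)"
proof -
  have d1: "((\<lambda>x. xlogx (1+x)) has_real_derivative (ln(1+x)+1) * 1) (at x)"
    by (rule DERIV_chain2[OF xlogx_deriv]) (use assms in \<open>auto intro!: derivative_eq_intros\<close>)
  have d2: "((\<lambda>x. xlogx (1-x)) has_real_derivative (ln(1-x)+1) * (-1)) (at x)"
    by (rule DERIV_chain2[OF xlogx_deriv]) (use assms in \<open>auto intro!: derivative_eq_intros\<close>)
  have eq: "Hfun \<beta> h p = (\<lambda>x. \<beta>*x^p + h*x - (xlogx (1+x) + xlogx (1-x))/2)"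
    by (auto simp: Hfun_def Ifun_def fun_eq_iff)
  have D: "((\<lambda>x. \<beta>*x^p + h*x - (xlogx (1+x) + xlogx (1-x))/2) has_real_derivative
     (\<beta> * (real p * x^(p-1)) + h * 1 - ((ln(1+x)+1) * 1 + (ln(1-x)+1) * (-1))/2)) (at x)"
    by (auto intro!: derivative_eq_intros d1 d2)
  have "(\<beta> * (real p * x^(p-1)) + h * 1 - ((ln(1+x)+1) * 1 + (ln(1-x)+1) * (-1))/2) = dH \<beta> h p x"
    by (simp add: dH_def algebra_simps)
  then show ?thesis using D eq by simp
qed

lemma dH_deriv: assumes "-1 < x" "x < 1"
  shows "(dH \<beta> h p has_real_derivative d2H \<beta> p x) (at x)"
proof -
  have eq: "dH \<beta> h p = (\<lambda>x. \<beta> * real p * x^(p-1) + h - (ln (1+x) - ln (1-x))/2)"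
    by (auto simp: dH_def fun_eq_iff)
  have D: "((\<lambda>x. \<beta> * real p * x^(p-1) + h - (ln (1+x) - ln (1-x))/2) has_real_derivative
     (\<beta> * real p * (real (p-1) * x^(p-2)) - (1/(1+x) + 1/(1-x))/2)) (at x)"
    using assms by (auto intro!: derivative_eq_intros simp: numeral_2_eq_2)
  have "1 - x^2 = (1+x)*(1-x)" by (simp add: algebra_simps power2_eq_square)
  moreover have "1+x \<noteq> 0" "1-x\<noteq>0" "1 - x^2 \<noteq> 0" using assms by (auto simp: abs_square_eq_1)
  ultimately have "(\<beta> * real p * (real (p-1) * x^(p-2)) - (1/(1+x) + 1/(1-x))/2) = d2H \<beta> p x"
    by (simp add: d2H_def field_simps)
  then show ?thesis using D eq by simp
qed



definition lmax :: "(real\<Rightarrow>real) \<Rightarrow> real \<Rightarrow> real \<Rightarrow> real \<Rightarrow> bool" where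
 "lmax f a b x \<longleftrightarrow> a < x \<and> x < b \<and> (\<exists>e>0. \<forall>y. a<y \<and> y<b \<and> \<bar>y-x\<bar><e \<longrightarrow> f y \<le> f x)"

lemma lmax_deriv0:
  assumes der: "\<And>x. a<x \<Longrightarrow> x<b \<Longrightarrow> (f has_real_derivative f' x) (at x)"
    and "lmax f a b x"
  shows "f' x = 0"
proof -
  obtain e where e: "e>0" "\<forall>y. a<y \<and> y<b \<and> \<bar>y-x\<bar><e \<longrightarrow> f y \<le> f x" and x: "a<x" "x<b"
    using assms(2) unfolding lmax_def by blast
  show ?thesis
  proof (rule DERIV_local_max[OF der[OF x]])
    show "0 < min e (min (x-a) (b-x))" using e x by auto
    show "\<forall>y. \<bar>x - y\<bar> < min e (min (x-a) (b-x)) \<longrightarrow> f y \<le> f x"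
      using e by (auto simp: abs_if split: if_splits)
  qed
qed

lemma interior_min_deriv0:
  assumes der: "\<And>x. a<x \<Longrightarrow> x<b \<Longrightarrow> (f has_real_derivative f' x) (at x)"
    and "u < w" "w < v" "a \<le> u" "v \<le> b" "\<forall>y\<in>{u..v}. f w \<le> f y"
  shows "f' w = 0"
proof (rule DERIV_local_min[OF der])
  show "a < w" "w < b" using assms by auto
  show "0 < min (w-u) (v-w)" using assms by auto
  show "\<forall>y. \<bar>w - y\<bar> < min (w - u) (v - w) \<longrightarrow> f w \<le> f y"
    using assms(6) by (auto simp: abs_if split: if_splits)
qed

lemma between_lmax:
  assumes der: "\<And>x. a<x \<Longrightarrow> x<b \<Longrightarrow> (f has_real_derivative f' x) (at x)"
    and u: "lmax f a b u" and v: "lmax f a b v" and uv: "u < v"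
  shows "\<exists>c. u<c \<and> c<v \<and> f' c = 0"
proof -
  have ab: "a < u" "v < b" using u v unfolding lmax_def by auto
  have "continuous_on {u..v} f"
    using ab by (intro continuous_at_imp_continuous_on ballI DERIV_isCont[OF der]) auto
  then obtain z where z: "z \<in> {u..v}" "\<forall>y\<in>{u..v}. f z \<le> f y"
    using continuous_attains_inf[of "{u..v}" f] uv by auto
  have "\<exists>w. u < w \<and> w < v \<and> (\<forall>y\<in>{u..v}. f w \<le> f y)"
  proof -
    consider "u < z" "z < v" | "z = u" | "z = v" using z(1) by force
    then show ?thesis
    proof cases
      case 1 then show ?thesis using z by blast
    next
      case 2
      obtain e where e: "e>0" "\<forall>y. a<y \<and> y<b \<and> \<bar>y-u\<bar><e \<longrightarrow> f y \<le> f u"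
        using u unfolding lmax_def by blast
      define w where "w = u + min e (v-u)/2"
      have w: "u < w" "w < v" "\<bar>w - u\<bar> < e" using e uv by (auto simp: w_def min_def field_simps)
      have "f w \<le> f u" using e(2) w ab by auto
      then show ?thesis using w z 2 by (metis order.trans)
    next
      case 3
      obtain e where e: "e>0" "\<forall>y. a<y \<and> y<b \<and> \<bar>y-v\<bar><e \<longrightarrow> f y \<le> f v"
        using v unfolding lmax_def by blast
      define w where "w = v - min e (v-u)/2"
      have w: "u < w" "w < v" "\<bar>w - v\<bar> < e" using e uv by (auto simp: w_def min_def field_simps)
      have "f w \<le> f v" using e(2) w ab by auto
      then show ?thesis using w z 3 by (metis order.trans)
    qed
  qed
  then obtain w where w: "u < w" "w < v" "\<forall>y\<in>{u..v}. f w \<le> f y" by blast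
  have "f' w = 0"
    by (rule interior_min_deriv0[OF der w(1,2) _ _ w(3)]) (use ab in auto)
  then show ?thesis using w by blast
qed

lemma lmax_zeros:
  assumes der: "\<And>x. a<x \<Longrightarrow> x<b \<Longrightarrow> (f has_real_derivative f' x) (at x)"
    and fin: "finite S"
  shows "S \<noteq> {} \<longrightarrow> (\<forall>x\<in>S. lmax f a b x) \<longrightarrow>
    (\<exists>T. finite T \<and> T \<subseteq> {Min S..Max S} \<and> (\<forall>x\<in>T. f' x = 0) \<and> 2 * card S \<le> card T + 1)"
  using fin
proof (induction S rule: finite_linorder_max_induct)
  case empty then show ?case by simp
next
  case (insert b0 A)
  show ?case
  proof (intro impI)
    assume L: "\<forall>x\<in>insert b0 A. lmax f a b x"
    have b0A: "b0 \<notin> A" using insert by auto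
    have fb0: "f' b0 = 0" using lmax_deriv0[OF der] L by auto
    show "\<exists>T. finite T \<and> T \<subseteq> {Min (insert b0 A)..Max (insert b0 A)} \<and> (\<forall>x\<in>T. f' x = 0) \<and>
        2 * card (insert b0 A) \<le> card T + 1"
    proof (cases "A = {}")
      case True
      then show ?thesis using fb0 by (intro exI[of _ "{b0}"]) auto
    next
      case False
      obtain T where T: "finite T" "T \<subseteq> {Min A..Max A}" "\<forall>x\<in>T. f' x = 0" "2 * card A \<le> card T + 1"
        using insert False L by auto
      have mA: "Max A \<in> A" "Max A < b0" using False insert by auto
      have LL: "lmax f a b (Max A)" "lmax f a b b0" using L mA by auto
      obtain c where c: "Max A < c" "c < b0" "f' c = 0"
        using between_lmax[OF der LL mA(2)] by blast
      have cT: "c \<notin> T" "b0 \<notin> T" using T(2) c by auto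
      have "Min A \<le> Max A" using False insert by auto
      have mins: "Min (insert b0 A) = Min A" "Max (insert b0 A) = b0"
        using False insert.hyps(1) mA \<open>Min A \<le> Max A\<close> by (simp_all add: Min_insert Max_insert)
      show ?thesis
        apply (intro exI[of _ "insert b0 (insert c T)"])
        using T c cT b0A insert(1) mins \<open>Min A \<le> Max A\<close> fb0 by auto
    qed
  qed
qed

lemma rolle_zeros:
  assumes der: "\<And>x. a<x \<Longrightarrow> x<b \<Longrightarrow> (f has_real_derivative f' x) (at x)"
    and fin: "finite S"
  shows "S \<noteq> {} \<longrightarrow> S \<subseteq> {a<..<b} \<longrightarrow> (\<forall>x\<in>S. f x = 0) \<longrightarrow>
    (\<exists>T. finite T \<and> T \<subseteq> {Min S<..<Max S} \<and> (\<forall>x\<in>T. f' x = 0) \<and> card S \<le> card T + 1)"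
  using fin
proof (induction S rule: finite_linorder_max_induct)
  case empty then show ?case by simp
next
  case (insert b0 A)
  show ?case
  proof (intro impI)
    assume S: "insert b0 A \<subseteq> {a<..<b}" and Z: "\<forall>x\<in>insert b0 A. f x = 0"
    have b0A: "b0 \<notin> A" using insert by auto
    show "\<exists>T. finite T \<and> T \<subseteq> {Min (insert b0 A)<..<Max (insert b0 A)} \<and> (\<forall>x\<in>T. f' x = 0) \<and>
        card (insert b0 A) \<le> card T + 1"
    proof (cases "A = {}")
      case True
      then show ?thesis by (intro exI[of _ "{}"]) auto
    next
      case False
      obtain T where T: "finite T" "T \<subseteq> {Min A<..<Max A}" "\<forall>x\<in>T. f' x = 0" "card A \<le> card T + 1"
        using insert False S Z by auto
      have mA: "Max A \<in> A" "Max A < b0" using False insert by auto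
      have "continuous_on {Max A..b0} f"
      proof (intro continuous_at_imp_continuous_on ballI DERIV_isCont[OF der])
        fix x assume x: "x \<in> {Max A..b0}"
        have "a < Max A" "b0 < b" using S mA by auto
        then show "a < x" "x < b" using x by auto
      qed
      then obtain c where c: "Max A < c" "c < b0" "(*) (f' c) = (\<lambda>v. 0)"
        using Rolle_deriv[of "Max A" b0 f "\<lambda>x. (*) (f' x)"] mA Z S
          der[unfolded has_field_derivative_def] by force
      have c0: "f' c = 0" using fun_cong[OF c(3), of 1] by simp
      have cT: "c \<notin> T" using T(2) c by auto
      have "Min A \<le> Max A" using False insert by auto
      have mins: "Min (insert b0 A) = Min A" "Max (insert b0 A) = b0"
        using False insert.hyps(1) mA \<open>Min A \<le> Max A\<close> by (simp_all add: Min_insert Max_insert)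
      show ?thesis
        apply (intro exI[of _ "insert c T"])
        using T c c0 cT b0A insert(1) mins \<open>Min A \<le> Max A\<close> by auto
    qed
  qed
qed

lemma count_lmax:
  assumes der: "\<And>x. a<x \<Longrightarrow> x<b \<Longrightarrow> (f has_real_derivative f' x) (at x)"
    and der2: "\<And>x. a<x \<Longrightarrow> x<b \<Longrightarrow> (f' has_real_derivative f'' x) (at x)"
    and Z: "finite Z" "{x. a<x \<and> x<b \<and> f'' x = 0} \<subseteq> Z"
    and S: "finite S" "\<forall>x\<in>S. lmax f a b x"
  shows "2 * card S \<le> card Z + 2"
proof (cases "S = {}")
  case True then show ?thesis by simp
next
  case False
  have "\<exists>T. finite T \<and> T \<subseteq> {Min S..Max S} \<and> (\<forall>x\<in>T. f' x = 0) \<and> 2 * card S \<le> card T + 1"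
    apply (rule lmax_zeros[where a=a and b=b and f=f and f'=f', THEN mp, THEN mp])
    apply (erule (1) der)
    using S False by auto
  then obtain T where T: "finite T" "T \<subseteq> {Min S..Max S}" "\<forall>x\<in>T. f' x = 0" "2 * card S \<le> card T + 1"
    by (elim exE conjE)
  have "Min S \<in> S" "Max S \<in> S" using S False by auto
  then have "lmax f a b (Min S)" "lmax f a b (Max S)" using S(2) by blast+
  then have "a < Min S" "Max S < b" unfolding lmax_def by blast+
  then have Tab: "T \<subseteq> {a<..<b}" using T(2) by force
  have "card S \<ge> 1" using S False by (simp add: Suc_leI card_gt_0_iff)
  then have "T \<noteq> {}" using T(4) by auto
  have "\<exists>T2. finite T2 \<and> T2 \<subseteq> {Min T<..<Max T} \<and> (\<forall>x\<in>T2. f'' x = 0) \<and> card T \<le> card T2 + 1"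
    apply (rule rolle_zeros[where a=a and b=b and f=f' and f'=f'', THEN mp, THEN mp, THEN mp])
    apply (erule (1) der2)
    using T Tab \<open>T \<noteq> {}\<close> by auto
  then obtain T2 where T2: "finite T2" "T2 \<subseteq> {Min T<..<Max T}" "\<forall>x\<in>T2. f'' x = 0" "card T \<le> card T2 + 1"
    by (elim exE conjE)
  have "Min T \<in> T" "Max T \<in> T" using T(1) \<open>T \<noteq> {}\<close> by auto
  then have "a < Min T" "Max T < b" using Tab by auto
  then have "{Min T<..<Max T} \<subseteq> {a<..<b}" by auto
  then have "T2 \<subseteq> {x. a<x \<and> x<b \<and> f'' x = 0}" using T2(2,3) by auto
  then have "T2 \<subseteq> Z" using Z(2) by blast
  then have "card T2 \<le> card Z" using Z(1) card_mono by blast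
  then show ?thesis using T(4) T2(4) by linarith
qed



lemma card_le1: assumes "\<forall>x\<in>A. \<forall>y\<in>A. x = y" shows "finite A \<and> card A \<le> 1"
proof (cases "A = {}")
  case True then show ?thesis by simp
next
  case False
  then obtain a where "a \<in> A" by blast
  then have "A = {a}" using assms by blast
  then show ?thesis by simp
qed

lemma g_mono:
  fixes C :: real and k :: nat
  assumes C: "C > 0" and k: "k \<ge> 1"
  defines "g \<equiv> \<lambda>x::real. C * (x^k - x^(k+2))"
  defines "s \<equiv> sqrt (real k / (real k + 2))"
  shows "\<And>u v. 0 \<le> u \<Longrightarrow> u < v \<Longrightarrow> v \<le> s \<Longrightarrow> g u < g v"
    and "\<And>u v. s \<le> u \<Longrightarrow> u < v \<Longrightarrow> g u > g v"
proof -
  have der: "(g has_real_derivative C * (real k * y^(k-1) - real (k+2) * y^(k+1))) (at y)" for y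
  proof -
    have d: "((\<lambda>x. x^k - x^(k+2)) has_real_derivative real k * y^(k-1) - real (k+2) * y^(k+2-1)) (at y)"
      using DERIV_diff[OF DERIV_pow[of k y] DERIV_pow[of "k+2" y]] by simp
    have "k+2-1 = k+1" by simp
    then show ?thesis unfolding g_def using DERIV_cmult[OF d, of C] by simp
  qed
  have cont: "continuous_on S g" for S
    unfolding g_def by (intro continuous_intros)
  have ss: "s^2 = real k / (real k + 2)" "s \<ge> 0" unfolding s_def by auto
  have fact: "C * (real k * y^(k-1) - real (k+2) * y^(k+1)) = C * y^(k-1) * (real k - (real k + 2) * y^2)" for y
  proof -
    have "y^(k+1) = y^(k-1) * y^2" using k by (simp add: power_add[symmetric])
    then show ?thesis by (simp add: algebra_simps)
  qed
  show "g u < g v" if "0 \<le> u" "u < v" "v \<le> s" for u v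
  proof (rule DERIV_pos_imp_increasing_open[OF \<open>u<v\<close> _ cont])
    fix y assume y: "u < y" "y < v"
    have "y^2 < s^2" using y that by (intro power_strict_mono) auto
    then have "(real k + 2) * y^2 < real k" using ss by (simp add: field_simps)
    moreover have "y^(k-1) > 0" using y that by auto
    ultimately have "C * y^(k-1) * (real k - (real k + 2) * y^2) > 0" using C by simp
    then show "\<exists>d. (g has_real_derivative d) (at y) \<and> d > 0" using der fact by metis
  qed
  show "g u > g v" if "s \<le> u" "u < v" for u v
  proof (rule DERIV_neg_imp_decreasing_open[OF \<open>u<v\<close> _ cont])
    fix y assume y: "u < y" "y < v"
    have "y^2 > s^2" using y that ss by (intro power_strict_mono) auto
    then have "(real k + 2) * y^2 > real k" using ss by (simp add: field_simps)
    moreover have "y^(k-1) > 0" using y that ss by auto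
    ultimately have "C * y^(k-1) * (real k - (real k + 2) * y^2) < 0" using C by (simp add: mult_pos_neg)
    then show "\<exists>d. (g has_real_derivative d) (at y) \<and> d < 0" using der fact by metis
  qed
qed

definition Zs :: "real \<Rightarrow> nat \<Rightarrow> real \<Rightarrow> real \<Rightarrow> real set" where
  "Zs \<beta> p a b = {x. a<x \<and> x<b \<and> d2H \<beta> p x = 0}"

lemma Z01: assumes p: "p \<ge> 3" and b: "\<beta> \<ge> 0"
  shows "finite (Zs \<beta> p 0 1) \<and> card (Zs \<beta> p 0 1) \<le> 2"
proof (cases "\<beta> = 0")
  case True
  have "Zs \<beta> p 0 1 = {}"
  proof -
    have "d2H \<beta> p x \<noteq> 0" if "0<x" "x<1" for x
    proof -
      have "x^2 < 1" using that by (simp add: power_less_one_iff abs_less_iff)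
      then show ?thesis using True by (simp add: d2H_def)
    qed
    then show ?thesis by (auto simp: Zs_def)
  qed
  then show ?thesis by simp
next
  case False
  then have bp: "\<beta> > 0" using b by simp
  define k where "k = p - 2"
  have k: "k \<ge> 1" using p by (simp add: k_def)
  define C where "C = \<beta> * real p * real (p-1)"
  have C: "C > 0" using bp p by (simp add: C_def)
  define g where "g = (\<lambda>x::real. C * (x^k - x^(k+2)))"
  define s where "s = sqrt (real k / (real k + 2))"
  have inc: "\<And>u v. 0 \<le> u \<Longrightarrow> u < v \<Longrightarrow> v \<le> s \<Longrightarrow> g u < g v"
    and dec: "\<And>u v. s \<le> u \<Longrightarrow> u < v \<Longrightarrow> g u > g v"
    using g_mono[OF C k] unfolding g_def s_def by auto
  have gz: "g x = 1" if "x \<in> Zs \<beta> p 0 1" for x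
  proof -
    have x: "0 < x" "x < 1" "d2H \<beta> p x = 0" using that by (auto simp: Zs_def)
    have "x^2 < 1" using x by (simp add: power_less_one_iff abs_less_iff)
    then have ne: "1 - x^2 \<noteq> 0" by simp
    have "C * x^k = 1/(1-x^2)" using x(3) by (simp add: d2H_def C_def k_def)
    then have "C * x^k * (1 - x^2) = 1/(1-x^2) * (1 - x^2)" by simp
    also have "\<dots> = 1" using ne by simp
    finally have "C * x^k * (1 - x^2) = 1" .
    moreover have "x^(k+2) = x^k * x^2" by (simp only: power_add)
    then have "g x = C * x^k * (1 - x^2)" by (simp add: g_def algebra_simps power2_eq_square)
    ultimately show ?thesis by simp
  qed
  define A1 where "A1 = Zs \<beta> p 0 1 \<inter> {..s}"
  define A2 where "A2 = Zs \<beta> p 0 1 \<inter> {s..}"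
  have "\<forall>x\<in>A1. \<forall>y\<in>A1. x = y"
  proof (intro ballI, rule ccontr)
    fix x y assume xy: "x \<in> A1" "y \<in> A1" "x \<noteq> y"
    have pos: "x > 0" "y > 0" using xy by (auto simp: A1_def Zs_def)
    consider "x < y" | "y < x" using xy(3) by linarith
    then show False
    proof cases
      case 1 then have "g x < g y" using inc xy pos by (auto simp: A1_def)
      then show False using gz xy by (auto simp: A1_def)
    next
      case 2 then have "g y < g x" using inc xy pos by (auto simp: A1_def)
      then show False using gz xy by (auto simp: A1_def)
    qed
  qed
  then have a1: "finite A1" "card A1 \<le> 1" using card_le1 by blast+
  have "\<forall>x\<in>A2. \<forall>y\<in>A2. x = y"
  proof (intro ballI, rule ccontr)
    fix x y assume xy: "x \<in> A2" "y \<in> A2" "x \<noteq> y"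
    consider "x < y" | "y < x" using xy(3) by linarith
    then show False
    proof cases
      case 1 then have "g x > g y" using dec xy by (auto simp: A2_def)
      then show False using gz xy by (auto simp: A2_def)
    next
      case 2 then have "g y > g x" using dec xy by (auto simp: A2_def)
      then show False using gz xy by (auto simp: A2_def)
    qed
  qed
  then have a2: "finite A2" "card A2 \<le> 1" using card_le1 by blast+
  have "Zs \<beta> p 0 1 = A1 \<union> A2" by (auto simp: A1_def A2_def)
  moreover have "card (A1 \<union> A2) \<le> 2" using card_Un_le[of A1 A2] a1 a2 by linarith
  ultimately show ?thesis using a1 a2 by simp
qed



lemma d2H_even: "even p \<Longrightarrow> d2H \<beta> p (-x) = d2H \<beta> p x"
proof -
  assume "even p"
  then have "even (p-2)" by simp
  then show ?thesis by (simp add: d2H_def)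
qed

lemma d2H_zero: "p \<ge> 3 \<Longrightarrow> d2H \<beta> p 0 = -1"
  by (simp add: d2H_def)

lemma Z_even: assumes "even p" "p \<ge> 3" "\<beta> \<ge> 0"
  shows "finite (Zs \<beta> p (-1) 0) \<and> card (Zs \<beta> p (-1) 0) \<le> 2"
    and "finite (Zs \<beta> p (-1) 1) \<and> card (Zs \<beta> p (-1) 1) \<le> 4"
proof -
  have Z: "finite (Zs \<beta> p 0 1)" "card (Zs \<beta> p 0 1) \<le> 2" using Z01 assms by auto
  have sub: "Zs \<beta> p (-1) 0 \<subseteq> uminus ` Zs \<beta> p 0 1"
  proof
    fix x assume "x \<in> Zs \<beta> p (-1) 0"
    then have "-x \<in> Zs \<beta> p 0 1" using d2H_even[OF assms(1), of \<beta> x] by (auto simp: Zs_def)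
    then show "x \<in> uminus ` Zs \<beta> p 0 1" by force
  qed
  have fi: "finite (uminus ` Zs \<beta> p 0 1)" "card (uminus ` Zs \<beta> p 0 1) \<le> 2"
    using Z card_image_le[OF Z(1), of uminus] by auto
  show "finite (Zs \<beta> p (-1) 0) \<and> card (Zs \<beta> p (-1) 0) \<le> 2"
    using sub fi card_mono[OF fi(1) sub] finite_subset by fastforce
  have sub2: "Zs \<beta> p (-1) 1 \<subseteq> Zs \<beta> p 0 1 \<union> uminus ` Zs \<beta> p 0 1"
  proof
    fix x assume x: "x \<in> Zs \<beta> p (-1) 1"
    have "x \<noteq> 0" using x d2H_zero[OF assms(2)] by (auto simp: Zs_def)
    then consider "x > 0" | "x < 0" by linarith
    then show "x \<in> Zs \<beta> p 0 1 \<union> uminus ` Zs \<beta> p 0 1"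
    proof cases
      case 1 then show ?thesis using x by (auto simp: Zs_def)
    next
      case 2 then have "x \<in> Zs \<beta> p (-1) 0" using x by (auto simp: Zs_def)
      then show ?thesis using sub by blast
    qed
  qed
  have "finite (Zs \<beta> p 0 1 \<union> uminus ` Zs \<beta> p 0 1)" using Z fi by simp
  moreover have "card (Zs \<beta> p 0 1 \<union> uminus ` Zs \<beta> p 0 1) \<le> 4"
    using card_Un_le[of "Zs \<beta> p 0 1" "uminus ` Zs \<beta> p 0 1"] Z fi by linarith
  ultimately show "finite (Zs \<beta> p (-1) 1) \<and> card (Zs \<beta> p (-1) 1) \<le> 4"
    using sub2 card_mono finite_subset by (metis order.trans)
qed

lemma Z_odd: assumes "odd p" "p \<ge> 3" "\<beta> \<ge> 0"
  shows "finite (Zs \<beta> p (-1) 1) \<and> card (Zs \<beta> p (-1) 1) \<le> 2"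
proof -
  have Z: "finite (Zs \<beta> p 0 1)" "card (Zs \<beta> p 0 1) \<le> 2" using Z01 assms by auto
  have sub: "Zs \<beta> p (-1) 1 \<subseteq> Zs \<beta> p 0 1"
  proof
    fix x assume x: "x \<in> Zs \<beta> p (-1) 1"
    have "x > 0"
    proof (rule ccontr)
      assume "\<not> x > 0"
      then have x0: "x \<le> 0" by simp
      have "odd (p-2)" using assms by simp
      then have "x^(p-2) \<le> 0" using x0 assms by (simp add: power_le_zero_eq)
      then have "\<beta> * real p * real (p-1) * x^(p-2) \<le> 0"
        using assms by (simp add: mult_nonneg_nonpos)
      moreover have "1/(1-x^2) > 0"
      proof -
        have "-1 < x" "x < 1" using x by (auto simp: Zs_def)
        then have "x^2 < 1" by (simp add: abs_square_less_1)
        then show ?thesis by simp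
      qed
      ultimately have "d2H \<beta> p x < 0" unfolding d2H_def by linarith
      then show False using x by (simp add: Zs_def)
    qed
    then show "x \<in> Zs \<beta> p 0 1" using x by (auto simp: Zs_def)
  qed
  then show ?thesis using Z card_mono finite_subset by (metis order.trans)
qed

lemma Ifun_sym: "Ifun (-x) = Ifun x"
  by (simp add: Ifun_def)

lemma Ifun_one: "Ifun 1 = ln 2" "Ifun (-1) = ln 2"
  by (simp_all add: Ifun_def xlogx_def)

lemma Hfun_00: "Hfun 0 0 p = (\<lambda>x. - Ifun x)"
  by (simp add: Hfun_def fun_eq_iff)

lemma Ifun_ge: assumes "-1 < x" "x < 1" shows "Ifun x \<ge> x^2/2"
proof -
  have main: "Ifun t \<ge> t^2/2" if t: "0 \<le> t" "t < 1" for t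
  proof -
    have psi: "(ln (1+y) - ln (1-y))/2 - y \<ge> 0" if y: "0 \<le> y" "y < 1" for y :: real
    proof -
      define \<psi> where "\<psi> = (\<lambda>y. - dH 0 0 p y - y)"
      have d: "(\<psi> has_real_derivative - d2H 0 p z - 1) (at z)" if "-1 < z" "z < 1" for z
        unfolding \<psi>_def using that by (intro derivative_intros dH_deriv)
      have "\<psi> 0 \<le> \<psi> y"
      proof (rule DERIV_nonneg_imp_increasing_open[OF y(1)])
        fix z assume z: "0 < z" "z < y"
        have "z^2 < 1" using z y by (simp add: power_less_one_iff abs_less_iff)
        then have "1/(1-z^2) \<ge> 1" by simp
        then have "- d2H 0 p z - 1 \<ge> 0" by (simp add: d2H_def)
        moreover have "(\<psi> has_real_derivative - d2H 0 p z - 1) (at z)" using d z y by auto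
        ultimately show "\<exists>l. (\<psi> has_real_derivative l) (at z) \<and> l \<ge> 0" by blast
      next
        show "continuous_on {0..y} \<psi>"
          using y by (intro continuous_at_imp_continuous_on ballI DERIV_isCont[OF d]) auto
      qed
      then show ?thesis by (simp add: \<psi>_def dH_def)
    qed
    define \<phi> where "\<phi> = (\<lambda>y. - Hfun 0 0 p y - y^2/2)"
    have sq: "((\<lambda>z. z^2/2) has_real_derivative z) (at z)" for z :: real
      using DERIV_cdivide[OF DERIV_pow[of 2 z], of 2] by simp
    have d: "(\<phi> has_real_derivative - dH 0 0 p z - z) (at z)" if "-1 < z" "z < 1" for z
      unfolding \<phi>_def using that by (intro derivative_intros Hfun_deriv sq)
    have "\<phi> 0 \<le> \<phi> t"
    proof (rule DERIV_nonneg_imp_increasing_open[OF t(1)])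
      fix z assume z: "0 < z" "z < t"
      have "- dH 0 0 p z - z \<ge> 0" using psi[of z] z t by (simp add: dH_def)
      moreover have "(\<phi> has_real_derivative - dH 0 0 p z - z) (at z)" using d z t by auto
      ultimately show "\<exists>l. (\<phi> has_real_derivative l) (at z) \<and> l \<ge> 0" by blast
    next
      show "continuous_on {0..t} \<phi>"
        using t by (intro continuous_at_imp_continuous_on ballI DERIV_isCont[OF d]) auto
    qed
    moreover have "Ifun 0 = 0" by (simp add: Ifun_def xlogx_def)
    ultimately show ?thesis by (simp add: \<phi>_def Hfun_00)
  qed
  show ?thesis
  proof (cases "x \<ge> 0")
    case True then show ?thesis using main assms by auto
  next
    case False then show ?thesis using main[of "-x"] assms Ifun_sym[of x] by auto
  qed
qed

lemma Ifun_nonneg: assumes "x \<in> {-1..1}" shows "Ifun x \<ge> 0"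
proof -
  consider "x = 1" | "x = -1" | "-1 < x \<and> x < 1" using assms by force
  then show ?thesis
  proof cases
    case 3 then have "Ifun x \<ge> x^2/2" using Ifun_ge by auto
    moreover have "x^2/2 \<ge> 0" by simp
    ultimately show ?thesis by linarith
  qed (use Ifun_one in auto)
qed

lemma Ifun_zero: "Ifun 0 = 0" by (simp add: Ifun_def xlogx_def)



lemma Hfun_zero: "p \<ge> 1 \<Longrightarrow> Hfun \<beta> h p 0 = 0"
  by (simp add: Hfun_def Ifun_zero)

lemma sup_props:
  shows "bdd_above (Hfun \<beta> h p ` {-1..1})"
    and "\<And>x. x \<in> {-1..1} \<Longrightarrow> Hfun \<beta> h p x \<le> supH \<beta> h p"
    and "\<exists>x\<in>{-1..1}. Hfun \<beta> h p x = supH \<beta> h p"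
proof -
  obtain z where z: "z \<in> {-1..1}" "\<forall>y\<in>{-1..1}. Hfun \<beta> h p y \<le> Hfun \<beta> h p z"
    using continuous_attains_sup[of "{-1..1::real}" "Hfun \<beta> h p"] Hfun_cont by auto
  have eq: "supH \<beta> h p = Hfun \<beta> h p z"
    unfolding supH_def by (rule cSup_eq_maximum) (use z in auto)
  show "bdd_above (Hfun \<beta> h p ` {-1..1})" using z by (auto simp: bdd_above_def)
  show "\<And>x. x \<in> {-1..1} \<Longrightarrow> Hfun \<beta> h p x \<le> supH \<beta> h p" using z eq by auto
  show "\<exists>x\<in>{-1..1}. Hfun \<beta> h p x = supH \<beta> h p" using z eq by auto
qed

lemma supH_nonneg: "p \<ge> 1 \<Longrightarrow> supH \<beta> h p \<ge> 0"
  using sup_props(2)[of 0 \<beta> h p] Hfun_zero by auto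

lemma global_iff: "is_global_max (Hfun \<beta> h p) x \<longleftrightarrow> x \<in> {-1..1} \<and> Hfun \<beta> h p x = supH \<beta> h p"
proof
  assume a: "is_global_max (Hfun \<beta> h p) x"
  then have x: "x \<in> {-1..1}" "\<forall>y\<in>{-1..1}. Hfun \<beta> h p y \<le> Hfun \<beta> h p x"
    by (auto simp: is_global_max_def)
  have "supH \<beta> h p = Hfun \<beta> h p x"
    unfolding supH_def by (rule cSup_eq_maximum) (use x in auto)
  then show "x \<in> {-1..1} \<and> Hfun \<beta> h p x = supH \<beta> h p" using x by simp
next
  assume "x \<in> {-1..1} \<and> Hfun \<beta> h p x = supH \<beta> h p"
  then show "is_global_max (Hfun \<beta> h p) x" using sup_props(2) by (auto simp: is_global_max_def)
qed

lemma global_local: "is_global_max f x \<Longrightarrow> is_local_max f x"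
  unfolding is_global_max_def is_local_max_def by (auto intro: exI[of _ 1])

lemma local_lmax: assumes "is_local_max f x" "-1 \<le> a" "a < x" "x < b" "b \<le> 1"
  shows "lmax f a b x"
proof -
  obtain e where e: "e > 0" "\<forall>y\<in>{-1..1}. \<bar>y - x\<bar> < e \<longrightarrow> f y \<le> f x"
    using assms(1) unfolding is_local_max_def by blast
  show ?thesis unfolding lmax_def using assms e by (auto intro!: exI[of _ e])
qed

lemma pow_abs_le1: "\<bar>(x::real)\<bar> \<le> 1 \<Longrightarrow> \<bar>x^n\<bar> \<le> 1"
  by (metis abs_ge_zero power_abs power_le_one)

lemma local_interior:
  assumes "is_local_max (Hfun \<beta> h p) x" "\<beta> \<ge> 0"
  shows "-1 < x \<and> x < 1"
proof -
  obtain e where e: "e > 0" "\<forall>y\<in>{-1..1}. \<bar>y - x\<bar> < e \<longrightarrow> Hfun \<beta> h p y \<le> Hfun \<beta> h p x"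
    and x: "x \<in> {-1..1}"
    using assms(1) unfolding is_local_max_def by blast
  define M where "M = \<beta> * real p + \<bar>h\<bar>"
  have M: "M \<ge> 0" using assms by (simp add: M_def)
  have E: "exp (-2*M) > 0" "exp (-2*M) \<le> 1" using M by auto
  have bnd: "\<bar>\<beta> * real p * \<xi>^(p-1) + h\<bar> \<le> M" if "\<bar>\<xi>\<bar> \<le> 1" for \<xi>
  proof -
    have "\<bar>\<beta> * real p * \<xi>^(p-1)\<bar> = \<beta> * real p * \<bar>\<xi>^(p-1)\<bar>" using assms by (simp add: abs_mult)
    also have "\<dots> \<le> \<beta> * real p * 1"
      using pow_abs_le1[OF that] assms by (intro mult_left_mono) auto
    finally show ?thesis unfolding M_def by linarith
  qed
  have cont: "continuous_on {u..v} (Hfun \<beta> h p)" if "-1 \<le> u" "v \<le> 1" for u v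
    by (rule continuous_on_subset[OF Hfun_cont]) (use that in auto)
  have diff: "Hfun \<beta> h p differentiable (at z)" if "-1 < z" "z < 1" for z
    unfolding real_differentiable_def using Hfun_deriv[OF that] by blast
  have "x \<noteq> 1"
  proof
    assume x1: "x = 1"
    define y where "y = max (1 - exp (-2*M)) (1 - e/2)"
    have y1: "1 - exp (-2*M) \<le> y" "1 - e/2 \<le> y" unfolding y_def by auto
    have "y < 1" using E(1) e by (auto simp: y_def)
    moreover have "0 \<le> y" using y1(1) E(2) by linarith
    ultimately have y: "0 \<le> y" "y < 1" "\<bar>y - x\<bar> < e" using y1 e x1 by auto
    obtain l z where z: "y < z" "z < 1" "(Hfun \<beta> h p has_real_derivative l) (at z)"
        "Hfun \<beta> h p 1 - Hfun \<beta> h p y = (1 - y) * l"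
      using MVT[OF y(2) cont diff] y by force
    have l: "l = dH \<beta> h p z" using DERIV_unique[OF z(3) Hfun_deriv] z y by auto
    have "1 - z < exp (-2*M)" using z y1 by auto
    then have "ln (1 - z) < -2*M" using z by (metis ln_exp ln_less_cancel_iff diff_gt_0_iff_gt E(1))
    moreover have "ln (1 + z) \<ge> 0" using z y by auto
    ultimately have "ln (1+z) - ln (1-z) > 2*M" by linarith
    then have "(ln (1+z) - ln (1-z))/2 > M" by simp
    moreover have "\<beta> * real p * z^(p-1) + h \<le> M" using bnd[of z] z y by auto
    ultimately have "l < 0" using l by (simp add: dH_def)
    moreover have "1 - y > 0" using y by simp
    ultimately have "(1 - y) * l < 0" by (simp add: mult_pos_neg)
    then have "Hfun \<beta> h p 1 < Hfun \<beta> h p y" using z(4) by linarith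
    moreover have "Hfun \<beta> h p y \<le> Hfun \<beta> h p x" using e y by auto
    ultimately show False using x1 by simp
  qed
  moreover have "x \<noteq> -1"
  proof
    assume x1: "x = -1"
    define y where "y = min (-1 + exp (-2*M)) (-1 + e/2)"
    have y1: "y \<le> -1 + exp (-2*M)" "y \<le> -1 + e/2" unfolding y_def by auto
    have "-1 < y" using E(1) e by (auto simp: y_def)
    moreover have "y \<le> 0" using y1(1) E(2) by linarith
    ultimately have y: "y \<le> 0" "-1 < y" "\<bar>y - x\<bar> < e" using y1 e x1 by auto
    obtain l z where z: "-1 < z" "z < y" "(Hfun \<beta> h p has_real_derivative l) (at z)"
        "Hfun \<beta> h p y - Hfun \<beta> h p (-1) = (y - (-1)) * l"
      using MVT[OF y(2) cont diff] y by force
    have l: "l = dH \<beta> h p z" using DERIV_unique[OF z(3) Hfun_deriv] z y by auto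
    have "1 + z < exp (-2*M)" using z y1 by auto
    then have "ln (1 + z) < -2*M" using z by (metis ln_exp ln_less_cancel_iff add.commute diff_gt_0_iff_gt E(1) diff_minus_eq_add)
    moreover have "ln (1 - z) \<ge> 0" using z y by auto
    ultimately have "ln (1+z) - ln (1-z) < -2*M" by linarith
    then have "(ln (1+z) - ln (1-z))/2 < -M" by simp
    moreover have "\<beta> * real p * z^(p-1) + h \<ge> -M" using bnd[of z] z y by auto
    ultimately have "l > 0" using l by (simp add: dH_def)
    moreover have "y - (-1) > 0" using y by simp
    ultimately have "(y - (-1)) * l > 0" by simp
    then have "Hfun \<beta> h p (-1) < Hfun \<beta> h p y" using z(4) by linarith
    moreover have "Hfun \<beta> h p y \<le> Hfun \<beta> h p x" using e y by auto
    ultimately show False using x1 by simp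
  qed
  ultimately show ?thesis using x by auto
qed



lemma sub_count:
  assumes "-1 \<le> a" "b \<le> 1" "finite G" "\<And>x. x \<in> G \<Longrightarrow> is_local_max (Hfun \<beta> h p) x \<and> a < x \<and> x < b"
    and "finite (Zs \<beta> p a b)"
  shows "2 * card G \<le> card (Zs \<beta> p a b) + 2"
  apply (rule count_lmax[where a=a and b=b and f="Hfun \<beta> h p" and f'="dH \<beta> h p" and f''="d2H \<beta> p"])
       apply (rule Hfun_deriv; use assms in linarith)
      apply (rule dH_deriv; use assms in linarith)
     apply (rule assms(5))
    apply (simp add: Zs_def)
   apply (rule assms(3))
  using assms(1,2,4) local_lmax by blast

lemma local_count:
  assumes p: "p \<ge> 3" and b: "\<beta> \<ge> 0"
  shows "finite {x. is_local_max (Hfun \<beta> h p) x} \<and>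
         card {x. is_local_max (Hfun \<beta> h p) x} \<le> (if even p then 3 else 2)"
proof (rule finite_if_finite_subsets_card_bdd)
  fix G assume G: "G \<subseteq> {x. is_local_max (Hfun \<beta> h p) x}" "finite G"
  have Z: "finite (Zs \<beta> p (-1) 1)" "card (Zs \<beta> p (-1) 1) \<le> (if even p then 4 else 2)"
    using Z_even(2)[OF _ p b] Z_odd[OF _ p b] by (cases "even p"; simp)+
  have "2 * card G \<le> card (Zs \<beta> p (-1) 1) + 2"
    by (rule sub_count[OF _ _ G(2) _ Z(1)]) (use G local_interior[OF _ b] in auto)
  then show "card G \<le> (if even p then 3 else 2)" using Z(2) by (cases "even p") auto
qed

lemma supH_zero_iff:
  assumes "p \<ge> 1"
  shows "supH \<beta> h p = 0 \<longleftrightarrow> (\<forall>x\<in>{-1..1}. Hfun \<beta> h p x \<le> 0)"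
proof
  assume "supH \<beta> h p = 0" then show "\<forall>x\<in>{-1..1}. Hfun \<beta> h p x \<le> 0" using sup_props(2)[where \<beta>=\<beta> and h=h and p=p] by auto
next
  assume a: "\<forall>x\<in>{-1..1}. Hfun \<beta> h p x \<le> 0"
  obtain x where "x \<in> {-1..1}" "Hfun \<beta> h p x = supH \<beta> h p" using sup_props(3) by blast
  then show "supH \<beta> h p = 0" using a supH_nonneg[OF assms, of \<beta> h] by force
qed

lemma dH_zero: "p \<ge> 2 \<Longrightarrow> dH \<beta> h p 0 = h"
  by (simp add: dH_def)

lemma h_pos_sup:
  assumes "p \<ge> 3" "h \<noteq> 0"
  shows "supH \<beta> h p > 0"
proof -
  have D: "(Hfun \<beta> h p has_real_derivative h) (at 0)"
    using Hfun_deriv[of 0 \<beta> h p] dH_zero[of p \<beta> h] assms by simp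
  have H0: "Hfun \<beta> h p 0 = 0" using Hfun_zero assms by simp
  show ?thesis
  proof (cases "h > 0")
    case True
    obtain d where d: "d > 0" "\<forall>t>0. t < d \<longrightarrow> Hfun \<beta> h p 0 < Hfun \<beta> h p (0 + t)"
      using DERIV_pos_inc_right[OF D True] by blast
    define t where "t = min (d/2) (1/2)"
    have t: "t > 0" "t < d" "t \<in> {-1..1}" using d by (auto simp: t_def)
    then have "Hfun \<beta> h p t > 0" using d H0 by auto
    then show ?thesis using sup_props(2)[where \<beta>=\<beta> and h=h and p=p, OF t(3)] by linarith
  next
    case False
    then have hn: "h < 0" using assms by simp
    obtain d where d: "d > 0" "\<forall>t>0. t < d \<longrightarrow> Hfun \<beta> h p 0 < Hfun \<beta> h p (0 - t)"
      using DERIV_neg_dec_left[OF D hn] by blast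
    define t where "t = min (d/2) (1/2)"
    have t: "t > 0" "t < d" "-t \<in> {-1..1}" using d by (auto simp: t_def)
    then have "Hfun \<beta> h p (-t) > 0" using d H0 by auto
    then show ?thesis using sup_props(2)[where \<beta>=\<beta> and h=h and p=p, OF t(3)] by linarith
  qed
qed

definition Sset :: "nat \<Rightarrow> real set" where
  "Sset p = {\<beta>. \<beta> \<ge> 0 \<and> supH \<beta> 0 p = 0}"

lemma beta_tilde_Sset: "beta_tilde p = Sup (Sset p)"
  by (simp add: beta_tilde_def Sset_def)

lemma Sset_le: assumes "p \<ge> 1" "\<beta> \<in> Sset p" shows "\<beta> \<le> ln 2"
proof -
  have "Hfun \<beta> 0 p 1 \<le> 0" using assms supH_zero_iff[of p \<beta> 0] by (auto simp: Sset_def)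
  then show ?thesis by (simp add: Hfun_def Ifun_one)
qed

lemma Sset_bdd: "p \<ge> 1 \<Longrightarrow> bdd_above (Sset p)"
  using Sset_le by (auto simp: bdd_above_def)

lemma Sset_0: assumes "p \<ge> 1" shows "0 \<in> Sset p"
proof -
  have "\<forall>x\<in>{-1..1}. Hfun 0 0 p x \<le> 0" using Ifun_nonneg by (simp add: Hfun_00)
  then show ?thesis using supH_zero_iff[OF assms] by (simp add: Sset_def)
qed

lemma Sset_down: assumes "p \<ge> 1" "\<beta> \<in> Sset p" "0 \<le> \<beta>'" "\<beta>' \<le> \<beta>" shows "\<beta>' \<in> Sset p"
proof -
  have a: "\<forall>x\<in>{-1..1}. Hfun \<beta> 0 p x \<le> 0" using assms supH_zero_iff[OF assms(1)] by (auto simp: Sset_def)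
  have "Hfun \<beta>' 0 p x \<le> 0" if x: "x \<in> {-1..1}" for x
  proof (cases "x^p \<ge> 0")
    case True
    then have "\<beta>' * x^p \<le> \<beta> * x^p" using assms by (simp add: mult_right_mono)
    moreover have "\<beta> * x^p \<le> Ifun x" using a x by (auto simp: Hfun_def)
    ultimately show ?thesis by (simp add: Hfun_def)
  next
    case False
    then have "\<beta>' * x^p \<le> 0" using assms by (simp add: mult_nonneg_nonpos)
    then show ?thesis using Ifun_nonneg[OF x] by (simp add: Hfun_def)
  qed
  then show ?thesis using supH_zero_iff[OF assms(1)] assms by (simp add: Sset_def)
qed

lemma bt_in: assumes "p \<ge> 1" shows "beta_tilde p \<in> Sset p" "beta_tilde p \<ge> 0"
proof -
  define bt where "bt = beta_tilde p"
  have ne: "Sset p \<noteq> {}" using Sset_0[OF assms] by blast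
  have bt0: "bt \<ge> 0" unfolding bt_def beta_tilde_Sset
    using cSup_upper[OF Sset_0[OF assms] Sset_bdd[OF assms]] .
  have "\<forall>x\<in>{-1..1}. Hfun bt 0 p x \<le> 0"
  proof (rule ccontr)
    assume "\<not> (\<forall>x\<in>{-1..1}. Hfun bt 0 p x \<le> 0)"
    then obtain x where x: "x \<in> {-1..1}" "Hfun bt 0 p x > 0" by force
    define \<eta> where "\<eta> = Hfun bt 0 p x"
    have xp: "x^p > 0"
    proof (rule ccontr)
      assume "\<not> x^p > 0"
      then have "bt * x^p \<le> 0" using bt0 by (simp add: mult_nonneg_nonpos)
      then show False using x Ifun_nonneg[OF x(1)] by (simp add: Hfun_def)
    qed
    have "\<bar>x\<bar> \<le> 1" using x by auto
    then have "\<bar>x^p\<bar> \<le> 1" by (rule pow_abs_le1)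
    then have xp1: "x^p \<le> 1" by linarith
    have "bt - \<eta> < Sup (Sset p)" using x unfolding \<eta>_def bt_def beta_tilde_Sset by simp
    then obtain b' where b': "b' \<in> Sset p" "bt - \<eta> < b'" using less_cSup_iff[OF ne Sset_bdd[OF assms]] by blast
    have "b' \<le> bt" unfolding bt_def beta_tilde_Sset using cSup_upper[OF b'(1) Sset_bdd[OF assms]] .
    then have "(bt - b') * x^p \<le> (bt - b') * 1" using xp1 by (intro mult_left_mono) auto
    then have "Hfun b' 0 p x > 0" using b' unfolding \<eta>_def by (simp add: Hfun_def algebra_simps)
    moreover have "Hfun b' 0 p x \<le> 0" using b'(1) x supH_zero_iff[OF assms] by (auto simp: Sset_def)
    ultimately show False by simp
  qed
  then show "beta_tilde p \<in> Sset p" using bt0 supH_zero_iff[OF assms] by (simp add: Sset_def bt_def)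
  show "beta_tilde p \<ge> 0" using bt0 bt_def by simp
qed

lemma part1:
  assumes p: "p \<ge> 3" and b: "\<beta> \<ge> 0"
  shows "supH \<beta> h p = 0 \<longleftrightarrow> (\<beta> \<le> beta_tilde p \<and> h = 0)"
proof
  assume s: "supH \<beta> h p = 0"
  have h: "h = 0"
  proof (rule ccontr)
    assume "h \<noteq> 0"
    then have "supH \<beta> h p > 0" by (rule h_pos_sup[OF p])
    then show False using s by simp
  qed
  then have "\<beta> \<in> Sset p" using s b by (simp add: Sset_def)
  then have "\<beta> \<le> beta_tilde p" unfolding beta_tilde_Sset
    by (rule cSup_upper) (rule Sset_bdd, use p in simp)
  then show "\<beta> \<le> beta_tilde p \<and> h = 0" using h by simp
next
  assume a: "\<beta> \<le> beta_tilde p \<and> h = 0"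
  have p1: "p \<ge> 1" using p by simp
  have "\<beta> \<in> Sset p" using Sset_down[OF p1 bt_in(1)[OF p1] b] a by blast
  then show "supH \<beta> h p = 0" using a by (simp add: Sset_def)
qed



lemma Hfun_neg: "even p \<Longrightarrow> Hfun \<beta> h p (-x) = Hfun \<beta> h p x - 2*h*x"
  by (simp add: Hfun_def Ifun_sym)

lemma exists_m:
  assumes p: "p \<ge> 4" "even p"
  shows "\<exists>m. 0 < m \<and> m < 1 \<and> Hfun (beta_tilde p) 0 p m = 0"
proof -
  have p1: "p \<ge> 1" using p by simp
  define bt where "bt = beta_tilde p"
  have bt: "bt \<in> Sset p" "bt \<ge> 0" using bt_in[OF p1] by (auto simp: bt_def)
  have btl: "bt \<le> ln 2" using Sset_le[OF p1 bt(1)] .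
  have sup0: "\<forall>x\<in>{-1..1}. Hfun bt 0 p x \<le> 0" using bt(1) supH_zero_iff[OF p1] by (auto simp: Sset_def)
  define B :: real where "B = ln 2 + 1"
  have B: "B > 1" using ln_gt_zero[of 2] by (simp add: B_def)
  define \<delta> where "\<delta> = 1 / (2*B)"
  have \<delta>: "\<delta> > 0" "\<delta> < 1/2" "B * \<delta> = 1/2" using B by (auto simp: \<delta>_def field_simps)
  have small: "Hfun \<beta> 0 p x \<le> 0" if b: "0 \<le> \<beta>" "\<beta> \<le> B" and x: "\<bar>x\<bar> \<le> \<delta>" for \<beta> x
  proof -
    have x1: "-1 < x" "x < 1" using x \<delta> by auto
    have I: "Ifun x \<ge> x^2/2" using Ifun_ge[OF x1] .
    have ax: "\<bar>x\<bar> \<le> 1" using x1 by auto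
    have "\<bar>x\<bar>^(p-2) \<le> \<bar>x\<bar>^1" using ax p by (intro power_decreasing) auto
    then have "\<bar>x\<bar>^(p-2) * \<bar>x\<bar>^2 \<le> \<bar>x\<bar> * \<bar>x\<bar>^2" by (intro mult_right_mono) auto
    moreover have "\<bar>x\<bar>^p = \<bar>x\<bar>^(p-2) * \<bar>x\<bar>^2"
    proof -
      have "p = (p-2)+2" using p by simp
      then have "\<bar>x\<bar>^p = \<bar>x\<bar>^((p-2)+2)" by simp
      also have "\<dots> = \<bar>x\<bar>^(p-2) * \<bar>x\<bar>^2" by (rule power_add)
      finally show ?thesis .
    qed
    ultimately have "\<bar>x\<bar>^p \<le> \<bar>x\<bar> * x^2" by simp
    also have "\<dots> \<le> \<delta> * x^2" using x by (intro mult_right_mono) auto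
    finally have xp: "\<bar>x\<bar>^p \<le> \<delta> * x^2" .
    have "\<beta> * x^p \<le> \<beta> * \<bar>x\<bar>^p" using b by (intro mult_left_mono) (auto simp: power_abs[symmetric])
    also have "\<dots> \<le> B * \<bar>x\<bar>^p" using b by (intro mult_right_mono) auto
    also have "\<dots> \<le> B * (\<delta> * x^2)" using B xp by (intro mult_left_mono) auto
    also have "\<dots> = x^2/2" using \<delta>(3) by (simp add: mult.assoc[symmetric])
    finally show ?thesis using I by (simp add: Hfun_def)
  qed
  obtain m where m: "m \<in> {\<delta>..1}" "\<forall>y\<in>{\<delta>..1}. Hfun bt 0 p y \<le> Hfun bt 0 p m"
  proof -
    have "continuous_on {\<delta>..1} (Hfun bt 0 p)"
      by (rule continuous_on_subset[OF Hfun_cont]) (use \<delta> in auto)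
    then show ?thesis using continuous_attains_sup[of "{\<delta>..1}" "Hfun bt 0 p"] \<delta> that by auto
  qed
  have m1: "m \<in> {-1..1}" using m \<delta> by auto
  have Fm: "Hfun bt 0 p m \<le> 0" using sup0 m1 by blast
  have Fm0: "Hfun bt 0 p m = 0"
  proof (rule ccontr)
    assume "Hfun bt 0 p m \<noteq> 0"
    then have neg: "Hfun bt 0 p m < 0" using Fm by simp
    define \<eta> where "\<eta> = - Hfun bt 0 p m"
    have \<eta>: "\<eta> > 0" using neg by (simp add: \<eta>_def)
    define c where "c = min \<eta> 1"
    have c: "c > 0" "c \<le> \<eta>" "c \<le> 1" using \<eta> by (auto simp: c_def)
    define b2 where "b2 = bt + c"
    have b2: "0 \<le> b2" "b2 \<le> B" using bt btl c by (auto simp: b2_def B_def)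
    have big: "Hfun b2 0 p x \<le> 0" if x: "x \<in> {\<delta>..1}" for x
    proof -
      have "x \<ge> 0" using x \<delta> by auto
      then have "x^p \<le> 1" "x^p \<ge> 0" using x by (auto intro: power_le_one)
      then have "c * x^p \<le> \<eta>" using c by (metis mult_left_le order.trans less_imp_le)
      moreover have "Hfun b2 0 p x = Hfun bt 0 p x + c * x^p" by (simp add: Hfun_def b2_def algebra_simps)
      moreover have "Hfun bt 0 p x \<le> - \<eta>" using m(2) x by (simp add: \<eta>_def)
      ultimately show ?thesis by linarith
    qed
    have "\<forall>x\<in>{-1..1}. Hfun b2 0 p x \<le> 0"
    proof
      fix x :: real assume x: "x \<in> {-1..1}"
      consider "\<bar>x\<bar> \<le> \<delta>" | "x \<ge> \<delta>" | "x \<le> -\<delta>" by linarith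
      then show "Hfun b2 0 p x \<le> 0"
      proof cases
        case 1 then show ?thesis using small b2 by blast
      next
        case 2 then show ?thesis using big x by auto
      next
        case 3
        have "Hfun b2 0 p x = Hfun b2 0 p (-x)" using Hfun_neg[OF p(2), of b2 0 x] by simp
        moreover have "-x \<in> {\<delta>..1}" using 3 x by auto
        ultimately show ?thesis using big by simp
      qed
    qed
    then have "b2 \<in> Sset p" using supH_zero_iff[OF p1] b2 by (simp add: Sset_def)
    then have "b2 \<le> bt" unfolding bt_def beta_tilde_Sset by (rule cSup_upper) (rule Sset_bdd[OF p1])
    then show False using c by (simp add: b2_def)
  qed
  have "supH bt 0 p = 0" using bt(1) by (simp add: Sset_def)
  then have "is_global_max (Hfun bt 0 p) m" using global_iff Fm0 m1 by simp
  then have "m < 1" using local_interior[OF global_local] bt(2) by blast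
  moreover have "m > 0" using m \<delta> by auto
  ultimately show ?thesis using Fm0 bt_def by blast
qed



lemma glob_bwd:
  assumes p: "p \<ge> 4" "even p" and h: "h = 0" and b: "\<beta> = beta_tilde p"
  shows "card {x. is_global_max (Hfun \<beta> h p) x} = 3"
proof -
  have p1: "p \<ge> 1" "p \<ge> 3" using p by auto
  have b0: "\<beta> \<ge> 0" using bt_in[OF p1(1)] b by simp
  obtain m where m: "0 < m" "m < 1" "Hfun \<beta> h p m = 0" using exists_m[OF p] h b by blast
  have s0: "supH \<beta> h p = 0" using bt_in[OF p1(1)] h b by (simp add: Sset_def)
  have mm: "Hfun \<beta> h p (-m) = 0" using Hfun_neg[OF p(2), of \<beta> h m] m h by simp
  have z: "Hfun \<beta> h p 0 = 0" using Hfun_zero p1 by simp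
  have sub: "{0, m, -m} \<subseteq> {x. is_global_max (Hfun \<beta> h p) x}"
    using global_iff m mm z s0 by auto
  have L: "finite {x. is_local_max (Hfun \<beta> h p) x}" "card {x. is_local_max (Hfun \<beta> h p) x} \<le> 3"
    using local_count[OF p1(2) b0, of h] p by auto
  have GL: "{x. is_global_max (Hfun \<beta> h p) x} \<subseteq> {x. is_local_max (Hfun \<beta> h p) x}"
    using global_local by blast
  have fin: "finite {x. is_global_max (Hfun \<beta> h p) x}" using finite_subset[OF GL L(1)] .
  have "card {x. is_global_max (Hfun \<beta> h p) x} \<le> 3" using card_mono[OF L(1) GL] L(2) by linarith
  moreover have "card {0, m, -m} = 3" using m by auto
  then have "card {x. is_global_max (Hfun \<beta> h p) x} \<ge> 3" using card_mono[OF fin sub] by linarith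
  ultimately show ?thesis by linarith
qed

lemma card_sym:
  fixes G :: "real set"
  assumes "finite G" "0 \<notin> G" "\<And>x. x \<in> G \<Longrightarrow> -x \<in> G"
  shows "card G = 2 * card (G \<inter> {0<..})"
proof -
  define A where "A = G \<inter> {0<..}"
  have GA: "G = A \<union> uminus ` A"
  proof
    show "G \<subseteq> A \<union> uminus ` A"
    proof
      fix x assume x: "x \<in> G"
      show "x \<in> A \<union> uminus ` A"
      proof (cases "x > 0")
        case True then show ?thesis using x by (auto simp: A_def)
      next
        case False
        moreover have "x \<noteq> 0" using x assms(2) by auto
        ultimately have "x < 0" by linarith
        then have "-x \<in> A" using assms(3)[OF x] by (auto simp: A_def)
        then have "-(-x) \<in> uminus ` A" by blast
        then show ?thesis by simp
      qed
    qed
    show "A \<union> uminus ` A \<subseteq> G" using assms(3) by (auto simp: A_def)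
  qed
  have fA: "finite A" using assms(1) by (simp add: A_def)
  have dis: "A \<inter> uminus ` A = {}" by (auto simp: A_def)
  have "card (uminus ` A) = card A" by (rule card_image) (simp add: inj_on_def)
  then have "card G = card A + card A" using GA card_Un_disjoint[OF fA _ dis] fA by simp
  then show ?thesis by (simp add: A_def)
qed

lemma glob_fwd:
  assumes p: "p \<ge> 3" and b: "\<beta> \<ge> 0" and G3: "card {x. is_global_max (Hfun \<beta> h p) x} = 3"
  shows "p \<ge> 4 \<and> even p \<and> h = 0 \<and> \<beta> = beta_tilde p"
proof -
  define Gs where "Gs = {x. is_global_max (Hfun \<beta> h p) x}"
  have p1: "p \<ge> 1" using p by simp
  have fin: "finite Gs" using G3 unfolding Gs_def by (metis card.infinite zero_neq_numeral)
  have c3: "card Gs = 3" using G3 by (simp add: Gs_def)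
  have L: "finite {x. is_local_max (Hfun \<beta> h p) x}"
     "card {x. is_local_max (Hfun \<beta> h p) x} \<le> (if even p then 3 else 2)"
    using local_count[OF p b, of h] by auto
  have GL: "Gs \<subseteq> {x. is_local_max (Hfun \<beta> h p) x}" unfolding Gs_def using global_local by blast
  have cG: "card Gs \<le> (if even p then 3 else 2)" using card_mono[OF L(1) GL] L(2) by linarith
  have ev: "even p" using cG c3 by (cases "even p") auto
  then have p4: "p \<ge> 4" using p by presburger
  have Gchar: "x \<in> Gs \<longleftrightarrow> x \<in> {-1..1} \<and> Hfun \<beta> h p x = supH \<beta> h p" for x
    unfolding Gs_def using global_iff by simp
  have z: "Hfun \<beta> h p 0 = 0" using Hfun_zero p1 by simp
  have Gint: "x \<in> Gs \<Longrightarrow> -1 < x \<and> x < 1" for x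
    using GL local_interior[OF _ b] by blast
  have h0: "h = 0"
  proof (rule ccontr)
    assume hne: "h \<noteq> 0"
    have sp: "supH \<beta> h p > 0" using h_pos_sup[OF p hne] .
    have not0: "0 \<notin> Gs" using Gchar z sp by auto
    show False
    proof (cases "h > 0")
      case True
      have pos: "0 < x" if x: "x \<in> Gs" for x
      proof (rule ccontr)
        assume "\<not> 0 < x"
        moreover have "x \<noteq> 0" using x not0 by auto
        ultimately have "x < 0" by linarith
        then have "Hfun \<beta> h p (-x) > Hfun \<beta> h p x" using Hfun_neg[OF ev, of \<beta> h x] True
          by (simp add: mult_pos_neg)
        moreover have "-x \<in> {-1..1}" using Gchar x by auto
        then have "Hfun \<beta> h p (-x) \<le> supH \<beta> h p" using sup_props(2)[where \<beta>=\<beta> and h=h and p=p] by blast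
        ultimately show False using Gchar x by auto
      qed
      have Z: "finite (Zs \<beta> p 0 1)" "card (Zs \<beta> p 0 1) \<le> 2" using Z01[OF p b] by auto
      have "2 * card Gs \<le> card (Zs \<beta> p 0 1) + 2"
        by (rule sub_count[OF _ _ fin _ Z(1)]) (use GL pos Gint in auto)
      then show False using Z(2) c3 by linarith
    next
      case False
      then have hn: "h < 0" using hne by simp
      have neg: "x < 0" if x: "x \<in> Gs" for x
      proof (rule ccontr)
        assume "\<not> x < 0"
        moreover have "x \<noteq> 0" using x not0 by auto
        ultimately have "x > 0" by linarith
        then have "Hfun \<beta> h p (-x) > Hfun \<beta> h p x" using Hfun_neg[OF ev, of \<beta> h x] hn
          by (simp add: mult_neg_pos)
        moreover have "-x \<in> {-1..1}" using Gchar x by auto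
        then have "Hfun \<beta> h p (-x) \<le> supH \<beta> h p" using sup_props(2)[where \<beta>=\<beta> and h=h and p=p] by blast
        ultimately show False using Gchar x by auto
      qed
      have Z: "finite (Zs \<beta> p (-1) 0)" "card (Zs \<beta> p (-1) 0) \<le> 2" using Z_even(1)[OF ev p b] by auto
      have "2 * card Gs \<le> card (Zs \<beta> p (-1) 0) + 2"
        by (rule sub_count[OF _ _ fin _ Z(1)]) (use GL neg Gint in auto)
      then show False using Z(2) c3 by linarith
    qed
  qed
  have bt: "\<beta> = beta_tilde p"
  proof (rule ccontr)
    assume ne: "\<beta> \<noteq> beta_tilde p"
    show False
    proof (cases "\<beta> < beta_tilde p")
      case True
      have s0: "supH \<beta> h p = 0" using part1[OF p b] True h0 by simp
      obtain x where x: "x \<in> Gs" "x \<noteq> 0"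
      proof -
        have "\<not> Gs \<subseteq> {0}"
        proof
          assume "Gs \<subseteq> {0}"
          then have "card Gs \<le> card {0::real}" by (intro card_mono) auto
          then show False using c3 by simp
        qed
        then show ?thesis using that by blast
      qed
      have Hx: "Hfun \<beta> h p x = 0" using Gchar x s0 by simp
      have x1: "x \<in> {-1..1}" using Gchar x by simp
      have "\<beta> < Sup (Sset p)" using True beta_tilde_Sset by simp
      then obtain b' where b': "b' \<in> Sset p" "\<beta> < b'"
        using less_cSup_iff[OF _ Sset_bdd[OF p1]] Sset_0[OF p1] by blast
      have xp: "x^p > 0" using ev x(2) by (simp add: zero_less_power_eq)
      have "Hfun b' 0 p x = Hfun \<beta> h p x + (b' - \<beta>) * x^p" using h0 by (simp add: Hfun_def algebra_simps)
      moreover have "(b' - \<beta>) * x^p > 0" using b' xp by simp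
      ultimately have "Hfun b' 0 p x > 0" using Hx by simp
      moreover have "Hfun b' 0 p x \<le> 0" using b'(1) x1 supH_zero_iff[OF p1] by (auto simp: Sset_def)
      ultimately show False by simp
    next
      case False
      then have gt: "\<not> \<beta> \<le> beta_tilde p" using ne by simp
      have "supH \<beta> h p \<noteq> 0" using part1[OF p b] gt by simp
      then have sp: "supH \<beta> h p > 0" using supH_nonneg[OF p1, of \<beta> h] by simp
      have not0: "0 \<notin> Gs" using Gchar z sp by auto
      have sym: "-x \<in> Gs" if "x \<in> Gs" for x
        using that Gchar Hfun_neg[OF ev, of \<beta> h x] h0 by auto
      have "card Gs = 2 * card (Gs \<inter> {0<..})" by (rule card_sym[OF fin not0 sym])
      then show False using c3 by presburger
    qed
  qed
  show ?thesis using p4 ev h0 bt by simp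
qed

theorem mainTheorem9:
  fixes p :: nat and \<beta> h :: real
  assumes "p \<ge> 3" and "\<beta> \<ge> 0"
  shows "(supH \<beta> h p \<ge> 0 \<and>
         (supH \<beta> h p = 0 \<longleftrightarrow> (\<beta> \<le> beta_tilde p \<and> h = 0))) \<and>
         (\<forall>x. is_local_max (Hfun \<beta> h p) x \<longrightarrow> -1 < x \<and> x < 1) \<and>
         (p = 3 \<longrightarrow> finite {x. is_local_max (Hfun \<beta> h p) x} \<and>
                   card {x. is_local_max (Hfun \<beta> h p) x} \<le> 2) \<and>
         (p \<ge> 4 \<longrightarrow> finite {x. is_local_max (Hfun \<beta> h p) x} \<and>
                   card {x. is_local_max (Hfun \<beta> h p) x} \<le> 3) \<and>
         (card {x. is_global_max (Hfun \<beta> h p) x} = 3 \<longleftrightarrow>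
           (p \<ge> 4 \<and> even p \<and> h = 0 \<and> \<beta> = beta_tilde p))"
proof -
  have p1: "p \<ge> 1" using assms by simp
  have L: "finite {x. is_local_max (Hfun \<beta> h p) x}"
     "card {x. is_local_max (Hfun \<beta> h p) x} \<le> (if even p then 3 else 2)"
    using local_count[OF assms, of h] by auto
  have A: "supH \<beta> h p \<ge> 0" using supH_nonneg[OF p1] .
  have B: "supH \<beta> h p = 0 \<longleftrightarrow> (\<beta> \<le> beta_tilde p \<and> h = 0)" using part1[OF assms] .
  have C: "\<forall>x. is_local_max (Hfun \<beta> h p) x \<longrightarrow> -1 < x \<and> x < 1"
    using local_interior[OF _ assms(2)] by blast
  have D: "p = 3 \<longrightarrow> finite {x. is_local_max (Hfun \<beta> h p) x} \<and>
                   card {x. is_local_max (Hfun \<beta> h p) x} \<le> 2" using L by auto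
  have E: "p \<ge> 4 \<longrightarrow> finite {x. is_local_max (Hfun \<beta> h p) x} \<and>
                   card {x. is_local_max (Hfun \<beta> h p) x} \<le> 3" using L by (auto split: if_splits)
  have F: "card {x. is_global_max (Hfun \<beta> h p) x} = 3 \<longleftrightarrow>
           (p \<ge> 4 \<and> even p \<and> h = 0 \<and> \<beta> = beta_tilde p)"
    using glob_fwd[OF assms] glob_bwd by blast
  show ?thesis using A B C D E F by blast
qed

end
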